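(* For any graph function $\alpha$ on a strongly connected digraph $G$, $\max_v y_v=0$.
   Context: $G$ is a strongly connected directed graph (self-loops allowed); a graph function assigns a real weight $\alpha_{uv}$ to each edge. $\alpha_v^{\text{in}}=\max_{u:(u,v)\in G}\alpha_{uv}$, $\alpha_v^{\text{out}}=\max_{w:(v,w)\in G}\alpha_{vw}$, $\rho^R_v=\max\{0,\alpha_v^{\text{out}}-\alpha_v^{\text{in}}\}$. A raising operation at $v$: if $\rho^R_v>0$ add $\rho^R_v/2$ to each incoming edge weight $\alpha_{uv}$ ($u\ne v$) and subtract it from each outgoing $\alpha_{vw}$ ($w\neq v$); otherwise do nothing. Starting from $\alpha$, for any infinite sequence of raising operations in which every vertex occurs infinitely often, the cumulative amount $r_v(t)$ by which each vertex has been raised converges to a limit vector $r^*$ independent of the sequence. The heights are $y_v=-r^*_v$. *)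

theory Defs
  imports Complex_Main
begin

text \<open>A digraph is a finite vertex set V with an edge relation E \<subseteq> V \<times> V
  (self-loops allowed). A graph function is a weight alpha u v for each edge (u,v);
  values off E are irrelevant.\<close>

definition strongly_connected :: "'a set \<Rightarrow> ('a \<times> 'a) set \<Rightarrow> bool" where
  "strongly_connected V E \<longleftrightarrow> V \<noteq> {} \<and> E \<subseteq> V \<times> V \<and> (\<forall>u\<in>V. \<forall>v\<in>V. (u, v) \<in> E\<^sup>+)"

definition alpha_in :: "('a \<times> 'a) set \<Rightarrow> ('a \<Rightarrow> 'a \<Rightarrow> real) \<Rightarrow> 'a \<Rightarrow> real" where
  "alpha_in E \<alpha> v = Max {\<alpha> u v | u. (u, v) \<in> E}"

definition alpha_out :: "('a \<times> 'a) set \<Rightarrow> ('a \<Rightarrow> 'a \<Rightarrow> real) \<Rightarrow> 'a \<Rightarrow> real" where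
  "alpha_out E \<alpha> v = Max {\<alpha> v w | w. (v, w) \<in> E}"

definition rhoR :: "('a \<times> 'a) set \<Rightarrow> ('a \<Rightarrow> 'a \<Rightarrow> real) \<Rightarrow> 'a \<Rightarrow> real" where
  "rhoR E \<alpha> v = max 0 (alpha_out E \<alpha> v - alpha_in E \<alpha> v)"

definition raise_op :: "('a \<times> 'a) set \<Rightarrow> ('a \<Rightarrow> 'a \<Rightarrow> real) \<Rightarrow> 'a \<Rightarrow> ('a \<Rightarrow> 'a \<Rightarrow> real)" where
  "raise_op E \<alpha> v = (\<lambda>a b. \<alpha> a b
      + (if b = v \<and> a \<noteq> v then rhoR E \<alpha> v / 2 else 0)
      - (if a = v \<and> b \<noteq> v then rhoR E \<alpha> v / 2 else 0))"

primrec alpha_seq :: "('a \<times> 'a) set \<Rightarrow> ('a \<Rightarrow> 'a \<Rightarrow> real) \<Rightarrow> (nat \<Rightarrow> 'a) \<Rightarrow> nat \<Rightarrow> ('a \<Rightarrow> 'a \<Rightarrow> real)" where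
  "alpha_seq E \<alpha> \<sigma> 0 = \<alpha>"
| "alpha_seq E \<alpha> \<sigma> (Suc t) = raise_op E (alpha_seq E \<alpha> \<sigma> t) (\<sigma> t)"

primrec raised :: "('a \<times> 'a) set \<Rightarrow> ('a \<Rightarrow> 'a \<Rightarrow> real) \<Rightarrow> (nat \<Rightarrow> 'a) \<Rightarrow> nat \<Rightarrow> 'a \<Rightarrow> real" where
  "raised E \<alpha> \<sigma> 0 = (\<lambda>v. 0)"
| "raised E \<alpha> \<sigma> (Suc t) = (\<lambda>v. raised E \<alpha> \<sigma> t v
      + (if v = \<sigma> t then rhoR E (alpha_seq E \<alpha> \<sigma> t) v / 2 else 0))"

definition fair_seq :: "'a set \<Rightarrow> (nat \<Rightarrow> 'a) \<Rightarrow> bool" where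
  "fair_seq V \<sigma> \<longleftrightarrow> (\<forall>t. \<sigma> t \<in> V) \<and> (\<forall>v\<in>V. \<forall>n. \<exists>t\<ge>n. \<sigma> t = v)"

end

theory Submission
  imports Defs
begin

definition pot :: "('a \<Rightarrow> 'a \<Rightarrow> real) \<Rightarrow> ('a \<Rightarrow> real) \<Rightarrow> 'a \<Rightarrow> 'a \<Rightarrow> real" where
  "pot \<alpha> r a b = \<alpha> a b + (if a = b then 0 else r b - r a)"

lemma Max_le_shift:
  fixes f g :: "'b \<Rightarrow> real"
  assumes "finite S" "S \<noteq> {}" "\<forall>x\<in>S. f x \<le> g x + d"
  shows "Max (f ` S) \<le> Max (g ` S) + d"
proof -
  obtain x0 where x0: "x0 \<in> S" "Max (f ` S) = f x0"
  proof -
    have "Max (f ` S) \<in> f ` S" using Max_in[of "f ` S"] assms(1,2) by auto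
    then show ?thesis using that by auto
  qed
  have "g x0 \<le> Max (g ` S)" using x0(1) assms(1) by simp
  then show ?thesis using x0 assms(3) by force
qed

lemma ain_eq: "alpha_in E \<alpha> v = Max ((\<lambda>u. \<alpha> u v) ` {u. (u, v) \<in> E})"
  unfolding alpha_in_def by (rule arg_cong[where f=Max]) auto

lemma aout_eq: "alpha_out E \<alpha> v = Max ((\<lambda>w. \<alpha> v w) ` {w. (v, w) \<in> E})"
  unfolding alpha_out_def by (rule arg_cong[where f=Max]) auto

lemma alpha_seq_pot: "alpha_seq E \<alpha> \<sigma> t = pot \<alpha> (raised E \<alpha> \<sigma> t)"
proof (induction t)
  case 0
  then show ?case by (auto simp: pot_def fun_eq_iff)
next
  case (Suc t)
  then show ?case by (auto simp: pot_def fun_eq_iff raise_op_def)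
qed

lemma rhoR_nonneg: "rhoR E \<alpha> v \<ge> 0" unfolding rhoR_def by simp

lemma raised_mono: "raised E \<alpha> \<sigma> t v \<le> raised E \<alpha> \<sigma> (Suc t) v"
  using rhoR_nonneg[of E "alpha_seq E \<alpha> \<sigma> t" v] by auto

lemma raised_nonneg: "raised E \<alpha> \<sigma> t v \<ge> 0"
proof (induction t)
  case (Suc t) then show ?case using raised_mono[of E \<alpha> \<sigma> t v] by linarith
qed simp

lemma pot_shift: "pot \<alpha> (\<lambda>u. r u - c) = pot \<alpha> r"
  by (auto simp: pot_def fun_eq_iff)

lemma fin_sets:
  assumes "finite V" "E \<subseteq> V \<times> V"
  shows "finite {w. (v, w) \<in> E}" "finite {u. (u, v) \<in> E}"
proof -
  have "{w. (v, w) \<in> E} \<subseteq> V" "{u. (u, v) \<in> E} \<subseteq> V" using assms(2) by auto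
  then show "finite {w. (v, w) \<in> E}" "finite {u. (u, v) \<in> E}"
    using assms(1) finite_subset by auto
qed

lemma step_bound:
  fixes r s :: "'a \<Rightarrow> real" and \<alpha> :: "'a \<Rightarrow> 'a \<Rightarrow> real"
  assumes fin: "finite V" "E \<subseteq> V \<times> V" and v: "v \<in> V"
    and ne: "{w. (v, w) \<in> E} \<noteq> {}" "{u. (u, v) \<in> E} \<noteq> {}"
    and le: "\<forall>u\<in>V. r u \<le> s u"
    and fx: "alpha_out E (pot \<alpha> s) v \<le> alpha_in E (pot \<alpha> s) v"
  shows "r v + rhoR E (pot \<alpha> r) v / 2 \<le> s v"
proof -
  define d where "d = s v - r v"
  have d0: "d \<ge> 0" using le v d_def by auto
  have o: "alpha_out E (pot \<alpha> r) v \<le> alpha_out E (pot \<alpha> s) v + d"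
    unfolding aout_eq
  proof (rule Max_le_shift[OF fin_sets(1)[OF fin] ne(1)], intro ballI)
    fix w assume "w \<in> {w. (v, w) \<in> E}"
    then have "w \<in> V" using fin(2) by auto
    then show "pot \<alpha> r v w \<le> pot \<alpha> s v w + d"
      using le d0 by (auto simp: pot_def d_def)
  qed
  have i: "alpha_in E (pot \<alpha> s) v \<le> alpha_in E (pot \<alpha> r) v + d"
    unfolding ain_eq
  proof (rule Max_le_shift[OF fin_sets(2)[OF fin] ne(2)], intro ballI)
    fix u assume "u \<in> {u. (u, v) \<in> E}"
    then have "u \<in> V" using fin(2) by auto
    then show "pot \<alpha> s u v \<le> pot \<alpha> r u v + d"
      using le d0 by (auto simp: pot_def d_def)
  qed
  have "alpha_out E (pot \<alpha> r) v - alpha_in E (pot \<alpha> r) v \<le> 2 * d"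
    using o i fx by linarith
  then have "rhoR E (pot \<alpha> r) v \<le> 2 * d" using d0 unfolding rhoR_def by simp
  then show ?thesis unfolding d_def by (simp add: field_simps)
qed

lemma lip_bound:
  assumes fin: "finite V" "E \<subseteq> V \<times> V" and v: "v \<in> V"
    and ne: "{w. (v, w) \<in> E} \<noteq> {}" "{u. (u, v) \<in> E} \<noteq> {}"
    and le: "\<forall>u\<in>V. \<bar>a u - b u\<bar> \<le> e"
  shows "alpha_out E (pot \<alpha> b) v \<le> alpha_out E (pot \<alpha> a) v + 2 * e"
    "alpha_in E (pot \<alpha> a) v \<le> alpha_in E (pot \<alpha> b) v + 2 * e"
proof -
  have e0: "e \<ge> 0" using le v by force
  have pw: "pot \<alpha> b x y \<le> pot \<alpha> a x y + 2 * e" if "x \<in> V" "y \<in> V" for x y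
  proof -
    have "\<bar>a x - b x\<bar> \<le> e" "\<bar>a y - b y\<bar> \<le> e" using le that by auto
    then show ?thesis using e0 by (auto simp: pot_def abs_le_iff)
  qed
  have pw2: "pot \<alpha> a x y \<le> pot \<alpha> b x y + 2 * e" if "x \<in> V" "y \<in> V" for x y
  proof -
    have "\<bar>a x - b x\<bar> \<le> e" "\<bar>a y - b y\<bar> \<le> e" using le that by auto
    then show ?thesis using e0 by (auto simp: pot_def abs_le_iff)
  qed
  show "alpha_out E (pot \<alpha> b) v \<le> alpha_out E (pot \<alpha> a) v + 2 * e"
    unfolding aout_eq
    by (rule Max_le_shift[OF fin_sets(1)[OF fin] ne(1)]) (use pw v fin(2) in auto)
  show "alpha_in E (pot \<alpha> a) v \<le> alpha_in E (pot \<alpha> b) v + 2 * e"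
    unfolding ain_eq
    by (rule Max_le_shift[OF fin_sets(2)[OF fin] ne(2)]) (use pw2 v fin(2) in auto)
qed

theorem corollary1:
  fixes V :: "'a set" and E :: "('a \<times> 'a) set" and \<alpha> :: "'a \<Rightarrow> 'a \<Rightarrow> real"
    and \<sigma> :: "nat \<Rightarrow> 'a" and rstar :: "'a \<Rightarrow> real"
  assumes "finite V"
    and "strongly_connected V E"
    and "fair_seq V \<sigma>"
    and "\<forall>v\<in>V. (\<lambda>t. raised E \<alpha> \<sigma> t v) \<longlonglongrightarrow> rstar v"
  shows "Max ((\<lambda>v. - rstar v) ` V) = 0"
proof -
  note fin = assms(1)
  have Vne: "V \<noteq> {}" and EV: "E \<subseteq> V \<times> V" and sc: "\<forall>u\<in>V. \<forall>v\<in>V. (u, v) \<in> E\<^sup>+"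
    using assms(2) unfolding strongly_connected_def by auto
  have fair: "\<forall>t. \<sigma> t \<in> V" "\<forall>v\<in>V. \<forall>n. \<exists>t\<ge>n. \<sigma> t = v"
    using assms(3) unfolding fair_seq_def by auto
  define r where "r = raised E \<alpha> \<sigma>"
  have lim: "\<And>v. v \<in> V \<Longrightarrow> (\<lambda>t. r t v) \<longlonglongrightarrow> rstar v" using assms(4) unfolding r_def by blast
  have ne1: "{w. (v, w) \<in> E} \<noteq> {}" if "v \<in> V" for v
  proof -
    have "(v, v) \<in> E\<^sup>+" using sc that by auto
    then obtain w where "(v, w) \<in> E" by (auto dest: tranclD)
    then show ?thesis by auto
  qed
  have ne2: "{u. (u, v) \<in> E} \<noteq> {}" if "v \<in> V" for v
  proof -
    have "(v, v) \<in> E\<^sup>+" using sc that by auto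
    then obtain u where "(u, v) \<in> E" by (auto dest: tranclD2)
    then show ?thesis by auto
  qed
  have rstep: "r (Suc t) v = r t v + (if v = \<sigma> t then rhoR E (pot \<alpha> (r t)) v / 2 else 0)" for t v
    by (simp add: r_def alpha_seq_pot)
  have rle: "r t v \<le> rstar v" if "v \<in> V" for t v
  proof -
    have "incseq (\<lambda>t. r t v)" unfolding r_def by (rule incseq_SucI) (rule raised_mono)
    then show ?thesis using incseq_le lim that by blast
  qed
  have r0: "0 \<le> rstar v" if "v \<in> V" for v
    using rle[OF that, of 0] by (simp add: r_def)
  have fixp: "alpha_out E (pot \<alpha> rstar) v \<le> alpha_in E (pot \<alpha> rstar) v" if v: "v \<in> V" for v
  proof (rule field_le_epsilon)
    fix e :: real assume e: "0 < e"
    define \<epsilon> where "\<epsilon> = e / 6"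
    have ep: "\<epsilon> > 0" using e \<epsilon>_def by simp
    have "\<forall>u\<in>V. eventually (\<lambda>t. dist (r t u) (rstar u) < \<epsilon>) sequentially"
    proof
      fix u assume "u \<in> V"
      then have "(\<lambda>t. r t u) \<longlonglongrightarrow> rstar u" by (rule lim)
      then show "eventually (\<lambda>t. dist (r t u) (rstar u) < \<epsilon>) sequentially"
        using ep by (simp add: tendsto_iff)
    qed
    then have "eventually (\<lambda>t. \<forall>u\<in>V. dist (r t u) (rstar u) < \<epsilon>) sequentially"
      by (rule eventually_ball_finite[OF fin])
    then obtain N where N: "\<And>t. t \<ge> N \<Longrightarrow> \<forall>u\<in>V. dist (r t u) (rstar u) < \<epsilon>"
      unfolding eventually_sequentially by blast
    obtain t where t: "t \<ge> N" "\<sigma> t = v" using fair(2) v by blast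
    have close: "\<forall>u\<in>V. \<bar>r t u - rstar u\<bar> \<le> \<epsilon>"
    proof
      fix u assume "u \<in> V"
      then have "dist (r t u) (rstar u) < \<epsilon>" using N[OF t(1)] by blast
      then show "\<bar>r t u - rstar u\<bar> \<le> \<epsilon>" unfolding dist_real_def by simp
    qed
    have "rhoR E (pot \<alpha> (r t)) v / 2 = r (Suc t) v - r t v" using rstep[of t v] t(2) by simp
    also have "\<dots> \<le> rstar v - r t v" using rle[OF v, of "Suc t"] by simp
    also have "\<dots> \<le> \<epsilon>" using bspec[OF close v] by simp
    finally have rho: "rhoR E (pot \<alpha> (r t)) v \<le> 2 * \<epsilon>" by simp
    have a: "alpha_out E (pot \<alpha> (r t)) v - alpha_in E (pot \<alpha> (r t)) v \<le> 2 * \<epsilon>"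
    proof -
      have "alpha_out E (pot \<alpha> (r t)) v - alpha_in E (pot \<alpha> (r t)) v \<le> rhoR E (pot \<alpha> (r t)) v"
        unfolding rhoR_def by (rule max.cobounded2)
      then show ?thesis using rho by linarith
    qed
    have b: "alpha_out E (pot \<alpha> rstar) v \<le> alpha_out E (pot \<alpha> (r t)) v + 2 * \<epsilon>"
      "alpha_in E (pot \<alpha> (r t)) v \<le> alpha_in E (pot \<alpha> rstar) v + 2 * \<epsilon>"
      using lip_bound[OF fin EV v ne1[OF v] ne2[OF v] close] by simp_all
    show "alpha_out E (pot \<alpha> rstar) v \<le> alpha_in E (pot \<alpha> rstar) v + e"
      using a b \<epsilon>_def by linarith
  qed
  define c where "c = Min (rstar ` V)"
  have cin: "c \<in> rstar ` V" unfolding c_def using fin Vne by auto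
  have cle: "c \<le> rstar u" if "u \<in> V" for u unfolding c_def using fin that by auto
  define s where "s = (\<lambda>u. rstar u - c)"
  have fixs: "alpha_out E (pot \<alpha> s) v \<le> alpha_in E (pot \<alpha> s) v" if "v \<in> V" for v
    unfolding s_def pot_shift using fixp that by simp
  have bound: "\<forall>u\<in>V. r t u \<le> s u" for t
  proof (induction t)
    case 0
    then show ?case using cle by (simp add: r_def s_def)
  next
    case (Suc t)
    show ?case
    proof
      fix u assume u: "u \<in> V"
      show "r (Suc t) u \<le> s u"
      proof (cases "u = \<sigma> t")
        case True
        have "r t u + rhoR E (pot \<alpha> (r t)) u / 2 \<le> s u"
          by (rule step_bound[OF fin EV u ne1[OF u] ne2[OF u] Suc fixs[OF u]])
        then show ?thesis using rstep[of t u] True by simp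
      next
        case False
        then show ?thesis using rstep[of t u] Suc u by simp
      qed
    qed
  qed
  have "rstar u \<le> s u" if "u \<in> V" for u
    by (rule LIMSEQ_le_const2[OF lim[OF that]]) (use bound that in auto)
  note rs = this
  obtain z where z: "z \<in> V" "rstar z = c" using cin by auto
  have c0: "c \<le> 0" using rs[OF z(1)] unfolding s_def by simp
  have "c = 0" using c0 r0[OF z(1)] z(2) by simp
  show ?thesis
  proof (rule Max_eqI)
    show "finite ((\<lambda>v. - rstar v) ` V)" using fin by simp
    show "y \<le> 0" if "y \<in> (\<lambda>v. - rstar v) ` V" for y using that r0 by auto
    show "0 \<in> (\<lambda>v. - rstar v) ` V" using z \<open>c = 0\<close> by force
  qed
qed

end
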